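(* Let a partial coloring of an $n\times n$ square $A$ uniquely extend to $L(n,2n-2)$. Then there are no three distinct rows $i_1,i_2,i_3$ and three distinct columns $j_1,j_2,j_3$ such that either (a) the five entries $(i_1,j_1),(i_1,j_2),(i_2,j_2),(i_2,j_3),(i_3,j_3)$ are all uncolored; or (b) the five entries $(i_1,j_1),(i_2,j_1),(i_2,j_2),(i_3,j_2),(i_3,j_3)$ are all uncolored.
   Context: For positive integers $n,k$, let $\mathcal{L}_{n,k}$ be the set of $n\times n$ squares all of whose entries are colored with colors from a fixed set of $k$ colors $\{1,\dots,k\}$ such that any two entries in the same row, or in the same column, have different colors. Entries are indexed $(i,j)$, $i$ the row and $j$ the column. A partial coloring of an $n\times n$ square assigns colors from $\{1,\dots,k\}$ to some of its entries; the remaining entries are called uncolored. A partial coloring extends to $L(n,k)$ if the uncolored entries can be colored so that the resulting fully colored square lies in $\mathcal{L}_{n,k}$ (keeping the given colors), and it uniquely extends to $L(n,k)$ if there is exactly one such way. *)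

theory Defs
  imports Main
begin

(* A full coloring is a function
   nat => nat => nat; entries outside the square are normalized to 0 so that
   a coloring of the n x n square is represented by exactly one function. *)
definition in_L :: "nat \<Rightarrow> nat \<Rightarrow> (nat \<Rightarrow> nat \<Rightarrow> nat) \<Rightarrow> bool" where
  "in_L n k L \<longleftrightarrow>
     (\<forall>i j. (i < n \<and> j < n) \<longrightarrow> L i j \<in> {1..k}) \<and>
     (\<forall>i j. \<not> (i < n \<and> j < n) \<longrightarrow> L i j = 0) \<and>
     (\<forall>i j j'. i < n \<and> j < n \<and> j' < n \<and> j \<noteq> j' \<longrightarrow> L i j \<noteq> L i j') \<and>
     (\<forall>i i' j. i < n \<and> i' < n \<and> j < n \<and> i \<noteq> i' \<longrightarrow> L i j \<noteq> L i' j)"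

definition partial_coloring :: "nat \<Rightarrow> nat \<Rightarrow> (nat \<Rightarrow> nat \<Rightarrow> nat option) \<Rightarrow> bool" where
  "partial_coloring n k P \<longleftrightarrow>
     (\<forall>i j c. P i j = Some c \<longrightarrow> i < n \<and> j < n \<and> c \<in> {1..k})"

definition extension :: "nat \<Rightarrow> nat \<Rightarrow> (nat \<Rightarrow> nat \<Rightarrow> nat option) \<Rightarrow> (nat \<Rightarrow> nat \<Rightarrow> nat) \<Rightarrow> bool" where
  "extension n k P L \<longleftrightarrow> in_L n k L \<and> (\<forall>i j c. P i j = Some c \<longrightarrow> L i j = c)"

definition uniquely_extends :: "nat \<Rightarrow> nat \<Rightarrow> (nat \<Rightarrow> nat \<Rightarrow> nat option) \<Rightarrow> bool" where
  "uniquely_extends n k P \<longleftrightarrow> (\<exists>!L. extension n k P L)"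

end

theory Submission
  imports Defs
begin

lemma abstract:
  fixes xa xb xc xd xe xf xg xh xi :: nat and RA RB RC CA CB CC :: "nat \<Rightarrow> bool"
  assumes d: "xa \<noteq> xb" "xa \<noteq> xg" "xb \<noteq> xg" "xf \<noteq> xc" "xf \<noteq> xd" "xc \<noteq> xd"
     "xh \<noteq> xi" "xh \<noteq> xe" "xi \<noteq> xe" "xa \<noteq> xf" "xa \<noteq> xh" "xf \<noteq> xh"
     "xb \<noteq> xc" "xb \<noteq> xi" "xc \<noteq> xi" "xg \<noteq> xd" "xg \<noteq> xe" "xd \<noteq> xe"
  and m: "RA xa" "CA xa" "RA xb" "CB xb" "RA xg" "CC xg" "RB xf" "CA xf" "RB xc" "CB xc" "RB xd" "CC xd"
     "RC xh" "CA xh" "RC xi" "CB xi" "RC xe" "CC xe"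
  and cov: "RA xa \<or> CA xa" "RA xb \<or> CA xb" "RA xc \<or> CA xc" "RA xd \<or> CA xd" "RA xe \<or> CA xe" "RA xf \<or> CA xf" "RA xg \<or> CA xg" "RA xh \<or> CA xh" "RA xi \<or> CA xi" "RA xa \<or> CB xa" "RA xb \<or> CB xb" "RA xc \<or> CB xc" "RA xd \<or> CB xd" "RA xe \<or> CB xe" "RA xf \<or> CB xf" "RA xg \<or> CB xg" "RA xh \<or> CB xh" "RA xi \<or> CB xi" "RB xa \<or> CB xa" "RB xb \<or> CB xb" "RB xc \<or> CB xc" "RB xd \<or> CB xd" "RB xe \<or> CB xe" "RB xf \<or> CB xf" "RB xg \<or> CB xg" "RB xh \<or> CB xh" "RB xi \<or> CB xi" "RB xa \<or> CC xa" "RB xb \<or> CC xb" "RB xc \<or> CC xc" "RB xd \<or> CC xd" "RB xe \<or> CC xe" "RB xf \<or> CC xf" "RB xg \<or> CC xg" "RB xh \<or> CC xh" "RB xi \<or> CC xi" "RC xa \<or> CC xa" "RC xb \<or> CC xb" "RC xc \<or> CC xc" "RC xd \<or> CC xd" "RC xe \<or> CC xe" "RC xf \<or> CC xf" "RC xg \<or> CC xg" "RC xh \<or> CC xh" "RC xi \<or> CC xi"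
  and p1: "\<And>x y. RA x \<Longrightarrow> CA x \<Longrightarrow> RA y \<Longrightarrow> CA y \<Longrightarrow> x \<noteq> xa \<Longrightarrow> y \<noteq> xa \<Longrightarrow> x = y"
  and p2: "\<And>x y. RA x \<Longrightarrow> CB x \<Longrightarrow> RA y \<Longrightarrow> CB y \<Longrightarrow> x \<noteq> xb \<Longrightarrow> y \<noteq> xb \<Longrightarrow> x = y"
  and p3: "\<And>x y. RB x \<Longrightarrow> CB x \<Longrightarrow> RB y \<Longrightarrow> CB y \<Longrightarrow> x \<noteq> xc \<Longrightarrow> y \<noteq> xc \<Longrightarrow> x = y"
  and p4: "\<And>x y. RB x \<Longrightarrow> CC x \<Longrightarrow> RB y \<Longrightarrow> CC y \<Longrightarrow> x \<noteq> xd \<Longrightarrow> y \<noteq> xd \<Longrightarrow> x = y"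
  and p5: "\<And>x y. RC x \<Longrightarrow> CC x \<Longrightarrow> RC y \<Longrightarrow> CC y \<Longrightarrow> x \<noteq> xe \<Longrightarrow> y \<noteq> xe \<Longrightarrow> x = y"
  and s: "CA xb \<or> CB xa" "RA xc \<or> RB xb" "CB xd \<or> CC xc" "RB xe \<or> RC xd"
  shows False
  using assms by smt


definition rowset :: "(nat \<Rightarrow> nat \<Rightarrow> nat) \<Rightarrow> nat \<Rightarrow> nat \<Rightarrow> nat \<Rightarrow> bool" where
  "rowset L n i x \<longleftrightarrow> (\<exists>j<n. L i j = x)"

definition colset :: "(nat \<Rightarrow> nat \<Rightarrow> nat) \<Rightarrow> nat \<Rightarrow> nat \<Rightarrow> nat \<Rightarrow> bool" where
  "colset L n j x \<longleftrightarrow> (\<exists>i<n. L i j = x)"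

lemma cover:
  assumes ext: "extension n k P L" and uni: "\<And>L'. extension n k P L' \<Longrightarrow> L' = L"
    and none: "P i j = None" and ij: "i < n" "j < n" and x: "x \<in> {1..k}"
  shows "rowset L n i x \<or> colset L n j x"
proof (rule ccontr)
  assume nx: "\<not> (rowset L n i x \<or> colset L n j x)"
  define L' where "L' = (\<lambda>a b. if a = i \<and> b = j then x else L a b)"
  have inL: "in_L n k L" using ext unfolding extension_def by simp
  have "extension n k P L'"
    unfolding extension_def
  proof
    have r: "\<forall>i j j'. i < n \<and> j < n \<and> j' < n \<and> j \<noteq> j' \<longrightarrow> L i j \<noteq> L i j'"
      and c: "\<forall>i i' j. i < n \<and> i' < n \<and> j < n \<and> i \<noteq> i' \<longrightarrow> L i j \<noteq> L i' j"
      and v: "\<forall>i j. (i < n \<and> j < n) \<longrightarrow> L i j \<in> {1..k}"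
      and z: "\<forall>i j. \<not> (i < n \<and> j < n) \<longrightarrow> L i j = 0"
      using inL unfolding in_L_def by blast+
    have nr: "\<And>b. b < n \<Longrightarrow> L i b \<noteq> x" and nc: "\<And>a. a < n \<Longrightarrow> L a j \<noteq> x"
      using nx unfolding rowset_def colset_def by blast+
    show "in_L n k L'"
      unfolding in_L_def
    proof (intro conjI)
      show "\<forall>a b. a < n \<and> b < n \<longrightarrow> L' a b \<in> {1..k}"
        using v x unfolding L'_def by auto
      show "\<forall>a b. \<not> (a < n \<and> b < n) \<longrightarrow> L' a b = 0"
        using z ij unfolding L'_def by auto
      show "\<forall>a b b'. a < n \<and> b < n \<and> b' < n \<and> b \<noteq> b' \<longrightarrow> L' a b \<noteq> L' a b'"
      proof (intro allI impI)
        fix a b b' assume H: "a < n \<and> b < n \<and> b' < n \<and> b \<noteq> b'"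
        show "L' a b \<noteq> L' a b'"
          using r[rule_format, of a b b'] nr[of b] nr[of b'] H unfolding L'_def by auto
      qed
      show "\<forall>a a' b. a < n \<and> a' < n \<and> b < n \<and> a \<noteq> a' \<longrightarrow> L' a b \<noteq> L' a' b"
      proof (intro allI impI)
        fix a a' b assume H: "a < n \<and> a' < n \<and> b < n \<and> a \<noteq> a'"
        show "L' a b \<noteq> L' a' b"
          using c[rule_format, of a a' b] nc[of a] nc[of a'] H unfolding L'_def by auto
      qed
    qed
    show "\<forall>a b c. P a b = Some c \<longrightarrow> L' a b = c"
      using ext none unfolding extension_def L'_def by auto
  qed
  then have "L' = L" by (rule uni)
  then have "L' i j = L i j" by simp
  then have "L i j = x" unfolding L'_def by simp
  then show False using nx ij unfolding rowset_def by blast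
qed

lemma pair:
  assumes ext: "extension n (2*n-2) P L" and uni: "\<And>L'. extension n (2*n-2) P L' \<Longrightarrow> L' = L"
    and none: "P i j = None" and ij: "i < n" "j < n"
    and hx: "rowset L n i x" "colset L n j x" and hy: "rowset L n i y" "colset L n j y"
    and nx: "x \<noteq> L i j" and ny: "y \<noteq> L i j"
  shows "x = y"
proof (rule ccontr)
  assume xy: "x \<noteq> y"
  have inL: "in_L n (2*n-2) L" using ext unfolding extension_def by simp
  define Rs where "Rs = (\<lambda>b. L i b) ` {..<n}"
  define Cs where "Cs = (\<lambda>a. L a j) ` {..<n}"
  have "inj_on (\<lambda>b. L i b) {..<n}"
  proof (rule inj_onI)
    fix x y assume "x \<in> {..<n}" "y \<in> {..<n}" "L i x = L i y"
    then show "x = y" using inL ij unfolding in_L_def by (meson lessThan_iff)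
  qed
  then have cR: "card Rs = n" unfolding Rs_def by (simp add: card_image)
  have "inj_on (\<lambda>a. L a j) {..<n}"
  proof (rule inj_onI)
    fix x y assume "x \<in> {..<n}" "y \<in> {..<n}" "L x j = L y j"
    then show "x = y" using inL ij unfolding in_L_def by (meson lessThan_iff)
  qed
  then have cC: "card Cs = n" unfolding Cs_def by (simp add: card_image)
  have sub: "Rs \<union> Cs \<subseteq> {1..2*n-2}"
    using inL ij unfolding in_L_def Rs_def Cs_def by auto
  have "{1..2*n-2} \<subseteq> Rs \<union> Cs"
  proof
    fix c assume c: "c \<in> {1..2*n-2}"
    have "rowset L n i c \<or> colset L n j c"
      by (rule cover[OF ext uni none ij c])
    then show "c \<in> Rs \<union> Cs" unfolding rowset_def colset_def Rs_def Cs_def by auto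
  qed
  with sub have U: "Rs \<union> Cs = {1..2*n-2}" by blast
  have fin: "finite Rs" "finite Cs" unfolding Rs_def Cs_def by auto
  have "card Rs + card Cs = card (Rs \<union> Cs) + card (Rs \<inter> Cs)"
    using card_Un_Int[OF fin] .
  then have ci: "card (Rs \<inter> Cs) = 2" using U cR cC ij by simp
  have "L i j \<in> Rs \<inter> Cs" using ij unfolding Rs_def Cs_def by blast
  moreover have "x \<in> Rs \<inter> Cs" using hx unfolding rowset_def colset_def Rs_def Cs_def by force
  moreover have "y \<in> Rs \<inter> Cs" using hy unfolding rowset_def colset_def Rs_def Cs_def by force
  ultimately have "{L i j, x, y} \<subseteq> Rs \<inter> Cs" by blast
  then have "card {L i j, x, y} \<le> card (Rs \<inter> Cs)"
    using fin by (simp add: card_mono)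
  moreover have "card {L i j, x, y} = 3" using xy nx ny by auto
  ultimately show False using ci by simp
qed

lemma swap_row:
  assumes ext: "extension n k P L" and uni: "\<And>L'. extension n k P L' \<Longrightarrow> L' = L"
    and none: "P i j = None" "P i j' = None" and ij: "i < n" "j < n" "j' < n" and jj: "j \<noteq> j'"
  shows "colset L n j (L i j') \<or> colset L n j' (L i j)"
proof (rule ccontr)
  assume nx: "\<not> (colset L n j (L i j') \<or> colset L n j' (L i j))"
  define L' where "L' = (\<lambda>a b. if a = i \<and> b = j then L i j' else if a = i \<and> b = j' then L i j else L a b)"
  have inL: "in_L n k L" using ext unfolding extension_def by simp
  have r: "\<forall>i j j'. i < n \<and> j < n \<and> j' < n \<and> j \<noteq> j' \<longrightarrow> L i j \<noteq> L i j'"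
    and c: "\<forall>i i' j. i < n \<and> i' < n \<and> j < n \<and> i \<noteq> i' \<longrightarrow> L i j \<noteq> L i' j"
    and v: "\<forall>i j. (i < n \<and> j < n) \<longrightarrow> L i j \<in> {1..k}"
    and z: "\<forall>i j. \<not> (i < n \<and> j < n) \<longrightarrow> L i j = 0"
    using inL unfolding in_L_def by blast+
  have n1: "\<And>a. a < n \<Longrightarrow> L a j \<noteq> L i j'" and n2: "\<And>a. a < n \<Longrightarrow> L a j' \<noteq> L i j"
    using nx unfolding colset_def by blast+
  have "extension n k P L'"
    unfolding extension_def
  proof
    show "in_L n k L'"
      unfolding in_L_def
    proof (intro conjI)
      show "\<forall>a b. a < n \<and> b < n \<longrightarrow> L' a b \<in> {1..k}"
        using v ij unfolding L'_def by auto
      show "\<forall>a b. \<not> (a < n \<and> b < n) \<longrightarrow> L' a b = 0"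
        using z ij unfolding L'_def by auto
      show "\<forall>a b b'. a < n \<and> b < n \<and> b' < n \<and> b \<noteq> b' \<longrightarrow> L' a b \<noteq> L' a b'"
      proof (intro allI impI)
        fix a b b' assume H: "a < n \<and> b < n \<and> b' < n \<and> b \<noteq> b'"
        define sw where "sw = (\<lambda>b. if b = j then j' else if b = j' then j else b)"
        have e: "\<And>b. L' a b = (if a = i then L a (sw b) else L a b)"
          unfolding L'_def sw_def by auto
        have "sw b \<noteq> sw b'" "sw b < n" "sw b' < n" using H ij unfolding sw_def by auto
        then show "L' a b \<noteq> L' a b'"
          unfolding e using r[rule_format, of a "sw b" "sw b'"] r[rule_format, of a b b'] H by auto
      qed
      show "\<forall>a a' b. a < n \<and> a' < n \<and> b < n \<and> a \<noteq> a' \<longrightarrow> L' a b \<noteq> L' a' b"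
      proof (intro allI impI)
        fix a a' b assume H: "a < n \<and> a' < n \<and> b < n \<and> a \<noteq> a'"
        show "L' a b \<noteq> L' a' b"
          using c[rule_format, of a a' b] n1[of a] n1[of a'] n2[of a] n2[of a'] H
          unfolding L'_def by auto
      qed
    qed
    show "\<forall>a b c. P a b = Some c \<longrightarrow> L' a b = c"
      using ext none unfolding extension_def L'_def by auto
  qed
  then have "L' = L" by (rule uni)
  then have "L' i j = L i j" by simp
  then have "L i j' = L i j" unfolding L'_def by simp
  then show False using r ij jj by metis
qed

lemma swap_col:
  assumes ext: "extension n k P L" and uni: "\<And>L'. extension n k P L' \<Longrightarrow> L' = L"
    and none: "P i j = None" "P i' j = None" and ij: "i < n" "i' < n" "j < n" and ii: "i \<noteq> i'"
  shows "rowset L n i (L i' j) \<or> rowset L n i' (L i j)"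
proof (rule ccontr)
  assume nx: "\<not> (rowset L n i (L i' j) \<or> rowset L n i' (L i j))"
  define L' where "L' = (\<lambda>a b. if a = i \<and> b = j then L i' j else if a = i' \<and> b = j then L i j else L a b)"
  have inL: "in_L n k L" using ext unfolding extension_def by simp
  have r: "\<forall>i j j'. i < n \<and> j < n \<and> j' < n \<and> j \<noteq> j' \<longrightarrow> L i j \<noteq> L i j'"
    and c: "\<forall>i i' j. i < n \<and> i' < n \<and> j < n \<and> i \<noteq> i' \<longrightarrow> L i j \<noteq> L i' j"
    and v: "\<forall>i j. (i < n \<and> j < n) \<longrightarrow> L i j \<in> {1..k}"
    and z: "\<forall>i j. \<not> (i < n \<and> j < n) \<longrightarrow> L i j = 0"
    using inL unfolding in_L_def by blast+
  have n1: "\<And>b. b < n \<Longrightarrow> L i b \<noteq> L i' j" and n2: "\<And>b. b < n \<Longrightarrow> L i' b \<noteq> L i j"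
    using nx unfolding rowset_def by blast+
  have "extension n k P L'"
    unfolding extension_def
  proof
    show "in_L n k L'"
      unfolding in_L_def
    proof (intro conjI)
      show "\<forall>a b. a < n \<and> b < n \<longrightarrow> L' a b \<in> {1..k}"
        using v ij unfolding L'_def by auto
      show "\<forall>a b. \<not> (a < n \<and> b < n) \<longrightarrow> L' a b = 0"
        using z ij unfolding L'_def by auto
      show "\<forall>a b b'. a < n \<and> b < n \<and> b' < n \<and> b \<noteq> b' \<longrightarrow> L' a b \<noteq> L' a b'"
      proof (intro allI impI)
        fix a b b' assume H: "a < n \<and> b < n \<and> b' < n \<and> b \<noteq> b'"
        show "L' a b \<noteq> L' a b'"
          using r[rule_format, of a b b'] n1[of b] n1[of b'] n2[of b] n2[of b'] H
          unfolding L'_def by auto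
      qed
      show "\<forall>a a' b. a < n \<and> a' < n \<and> b < n \<and> a \<noteq> a' \<longrightarrow> L' a b \<noteq> L' a' b"
      proof (intro allI impI)
        fix a a' b assume H: "a < n \<and> a' < n \<and> b < n \<and> a \<noteq> a'"
        define sw where "sw = (\<lambda>a. if a = i then i' else if a = i' then i else a)"
        have e: "\<And>a. L' a b = (if b = j then L (sw a) b else L a b)"
          unfolding L'_def sw_def by auto
        have "sw a \<noteq> sw a'" "sw a < n" "sw a' < n" using H ij unfolding sw_def by auto
        then show "L' a b \<noteq> L' a' b"
          unfolding e using c[rule_format, of "sw a" "sw a'" b] c[rule_format, of a a' b] H by auto
      qed
    qed
    show "\<forall>a b c. P a b = Some c \<longrightarrow> L' a b = c"
      using ext none unfolding extension_def L'_def by auto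
  qed
  then have "L' = L" by (rule uni)
  then have "L' i j = L i j" by simp
  then have "L i' j = L i j" unfolding L'_def by simp
  then show False using c ij ii by metis
qed

lemma mem_rc: "i < n \<Longrightarrow> j < n \<Longrightarrow> rowset L n i (L i j) \<and> colset L n j (L i j)"
  unfolding rowset_def colset_def by blast

lemma rng: "in_L n k L \<Longrightarrow> i < n \<Longrightarrow> j < n \<Longrightarrow> L i j \<in> {1..k}"
  unfolding in_L_def by blast

lemma rowd: "in_L n k L \<Longrightarrow> i < n \<Longrightarrow> j < n \<Longrightarrow> j' < n \<Longrightarrow> j \<noteq> j' \<Longrightarrow> L i j \<noteq> L i j'"
  unfolding in_L_def by blast

lemma cold: "in_L n k L \<Longrightarrow> i < n \<Longrightarrow> i' < n \<Longrightarrow> j < n \<Longrightarrow> i \<noteq> i' \<Longrightarrow> L i j \<noteq> L i' j"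
  unfolding in_L_def by blast

theorem lemma4:
  fixes n :: nat and P :: "nat \<Rightarrow> nat \<Rightarrow> nat option"
  assumes "partial_coloring n (2 * n - 2) P"
    and "uniquely_extends n (2 * n - 2) P"
  shows "\<not> (\<exists>i1 i2 i3 j1 j2 j3.
            i1 < n \<and> i2 < n \<and> i3 < n \<and> j1 < n \<and> j2 < n \<and> j3 < n \<and>
            i1 \<noteq> i2 \<and> i1 \<noteq> i3 \<and> i2 \<noteq> i3 \<and>
            j1 \<noteq> j2 \<and> j1 \<noteq> j3 \<and> j2 \<noteq> j3 \<and>
            ((P i1 j1 = None \<and> P i1 j2 = None \<and> P i2 j2 = None \<and>
              P i2 j3 = None \<and> P i3 j3 = None) \<or>
             (P i1 j1 = None \<and> P i2 j1 = None \<and> P i2 j2 = None \<and>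
              P i3 j2 = None \<and> P i3 j3 = None)))"
proof
  assume "\<exists>i1 i2 i3 j1 j2 j3.
            i1 < n \<and> i2 < n \<and> i3 < n \<and> j1 < n \<and> j2 < n \<and> j3 < n \<and>
            i1 \<noteq> i2 \<and> i1 \<noteq> i3 \<and> i2 \<noteq> i3 \<and>
            j1 \<noteq> j2 \<and> j1 \<noteq> j3 \<and> j2 \<noteq> j3 \<and>
            ((P i1 j1 = None \<and> P i1 j2 = None \<and> P i2 j2 = None \<and>
              P i2 j3 = None \<and> P i3 j3 = None) \<or>
             (P i1 j1 = None \<and> P i2 j1 = None \<and> P i2 j2 = None \<and>
              P i3 j2 = None \<and> P i3 j3 = None))"
  then obtain i1 i2 i3 j1 j2 j3 where
    b: "i1 < n" "i2 < n" "i3 < n" "j1 < n" "j2 < n" "j3 < n"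
    and dst: "i1 \<noteq> i2" "i1 \<noteq> i3" "i2 \<noteq> i3" "j1 \<noteq> j2" "j1 \<noteq> j3" "j2 \<noteq> j3"
    and pat: "(P i1 j1 = None \<and> P i1 j2 = None \<and> P i2 j2 = None \<and>
              P i2 j3 = None \<and> P i3 j3 = None) \<or>
             (P i1 j1 = None \<and> P i2 j1 = None \<and> P i2 j2 = None \<and>
              P i3 j2 = None \<and> P i3 j3 = None)"
    by (elim exE conjE) (rule that, assumption+)
  have dst': "i2 \<noteq> i1" "i3 \<noteq> i1" "i3 \<noteq> i2" "j2 \<noteq> j1" "j3 \<noteq> j1" "j3 \<noteq> j2"
    using dst by auto
  obtain L where ext: "extension n (2*n-2) P L"
    and uni: "\<And>L'. extension n (2*n-2) P L' \<Longrightarrow> L' = L"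
    using assms(2) unfolding uniquely_extends_def by (elim ex1E) blast
  have inL: "in_L n (2*n-2) L" using ext unfolding extension_def by simp
  note cv = cover[OF ext uni]
  note pr = pair[OF ext uni]
  note sr = swap_row[OF ext uni]
  note sc = swap_col[OF ext uni]
  have cvA: "\<And>i j a bb. P i j = None \<Longrightarrow> i < n \<Longrightarrow> j < n \<Longrightarrow> a < n \<Longrightarrow> bb < n \<Longrightarrow> rowset L n i (L a bb) \<or> colset L n j (L a bb)"
    using cv rng[OF inL] by blast
  have cvB: "\<And>i j a bb. P i j = None \<Longrightarrow> i < n \<Longrightarrow> j < n \<Longrightarrow> a < n \<Longrightarrow> bb < n \<Longrightarrow> colset L n j (L a bb) \<or> rowset L n i (L a bb)"
    using cvA by blast
  from pat show False
  proof
    assume A: "P i1 j1 = None \<and> P i1 j2 = None \<and> P i2 j2 = None \<and>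
              P i2 j3 = None \<and> P i3 j3 = None"
    have D: "(L i1 j1) \<noteq> (L i1 j2)" "(L i1 j1) \<noteq> (L i1 j3)" "(L i1 j2) \<noteq> (L i1 j3)" "(L i2 j1) \<noteq> (L i2 j2)" "(L i2 j1) \<noteq> (L i2 j3)" "(L i2 j2) \<noteq> (L i2 j3)"
     "(L i3 j1) \<noteq> (L i3 j2)" "(L i3 j1) \<noteq> (L i3 j3)" "(L i3 j2) \<noteq> (L i3 j3)" "(L i1 j1) \<noteq> (L i2 j1)" "(L i1 j1) \<noteq> (L i3 j1)" "(L i2 j1) \<noteq> (L i3 j1)"
     "(L i1 j2) \<noteq> (L i2 j2)" "(L i1 j2) \<noteq> (L i3 j2)" "(L i2 j2) \<noteq> (L i3 j2)" "(L i1 j3) \<noteq> (L i2 j3)" "(L i1 j3) \<noteq> (L i3 j3)" "(L i2 j3) \<noteq> (L i3 j3)"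
      using b dst dst' by (simp_all add: rowd[OF inL] cold[OF inL])
    have M: "rowset L n i1 (L i1 j1)" "colset L n j1 (L i1 j1)" "rowset L n i1 (L i1 j2)" "colset L n j2 (L i1 j2)" "rowset L n i1 (L i1 j3)" "colset L n j3 (L i1 j3)" "rowset L n i2 (L i2 j1)" "colset L n j1 (L i2 j1)" "rowset L n i2 (L i2 j2)" "colset L n j2 (L i2 j2)" "rowset L n i2 (L i2 j3)" "colset L n j3 (L i2 j3)"
     "rowset L n i3 (L i3 j1)" "colset L n j1 (L i3 j1)" "rowset L n i3 (L i3 j2)" "colset L n j2 (L i3 j2)" "rowset L n i3 (L i3 j3)" "colset L n j3 (L i3 j3)"
      using b by (simp_all add: mem_rc)
    have CV: "rowset L n i1 (L i1 j1) \<or> colset L n j1 (L i1 j1)" "rowset L n i1 (L i1 j2) \<or> colset L n j1 (L i1 j2)" "rowset L n i1 (L i2 j2) \<or> colset L n j1 (L i2 j2)" "rowset L n i1 (L i2 j3) \<or> colset L n j1 (L i2 j3)" "rowset L n i1 (L i3 j3) \<or> colset L n j1 (L i3 j3)" "rowset L n i1 (L i2 j1) \<or> colset L n j1 (L i2 j1)" "rowset L n i1 (L i1 j3) \<or> colset L n j1 (L i1 j3)" "rowset L n i1 (L i3 j1) \<or> colset L n j1 (L i3 j1)" "rowset L n i1 (L i3 j2) \<or> colset L n j1 (L i3 j2)" "rowset L n i1 (L i1 j1) \<or> colset L n j2 (L i1 j1)" "rowset L n i1 (L i1 j2) \<or> colset L n j2 (L i1 j2)" "rowset L n i1 (L i2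 j2) \<or> colset L n j2 (L i2 j2)" "rowset L n i1 (L i2 j3) \<or> colset L n j2 (L i2 j3)" "rowset L n i1 (L i3 j3) \<or> colset L n j2 (L i3 j3)" "rowset L n i1 (L i2 j1) \<or> colset L n j2 (L i2 j1)" "rowset L n i1 (L i1 j3) \<or> colset L n j2 (L i1 j3)" "rowset L n i1 (L i3 j1) \<or> colset L n j2 (L i3 j1)" "rowset L n i1 (L i3 j2) \<or> colset L n j2 (L i3 j2)" "rowset L n i2 (L i1 j1) \<or> colset L n j2 (L i1 j1)" "rowset L n i2 (L i1 j2) \<or> colset L n j2 (L i1 j2)" "rowset L n i2 (L i2 j2) \<or> colset L n j2 (L i2 j2)" "rowset L n i2 (L i2 j3) \<or> colset L n j2 (L i2 j3)" "rowset L n i2 (L i3 j3) \<or> colset L n j2 (L i3 j3)" "rowset L n i2 (L i2 j1) \<or> colset L n j2 (L i2 j1)" "rowset L n i2 (L i1 j3) \<or> colset L n j2 (L i1 j3)" "rowset L n i2 (L i3 j1) \<or> colset L n j2 (L i3 j1)" "rowset L n i2 (L i3 j2) \<or> colset L n j2 (L i3 j2)" "rowset L n i2 (L i1 j1) \<or> colset L n j3 (L i1 j1)" "rowset L n i2 (L i1 j2) \<or> colset L n j3 (L i1 j2)" "rowset L n i2 (L i2 j2) \<or> colset L n j3 (L i2 j2)" "rowset L n i2 (L i2 j3) \<or> colset L n j3 (L i2 j3)" "rowset L n i2 (L i3 j3) \<or> colset L n j3 (L i3 j3)" "rowset L n i2 (L i2 j1) \<or> colset L n j3 (L i2 j1)"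 "rowset L n i2 (L i1 j3) \<or> colset L n j3 (L i1 j3)" "rowset L n i2 (L i3 j1) \<or> colset L n j3 (L i3 j1)" "rowset L n i2 (L i3 j2) \<or> colset L n j3 (L i3 j2)" "rowset L n i3 (L i1 j1) \<or> colset L n j3 (L i1 j1)" "rowset L n i3 (L i1 j2) \<or> colset L n j3 (L i1 j2)" "rowset L n i3 (L i2 j2) \<or> colset L n j3 (L i2 j2)" "rowset L n i3 (L i2 j3) \<or> colset L n j3 (L i2 j3)" "rowset L n i3 (L i3 j3) \<or> colset L n j3 (L i3 j3)" "rowset L n i3 (L i2 j1) \<or> colset L n j3 (L i2 j1)" "rowset L n i3 (L i1 j3) \<or> colset L n j3 (L i1 j3)" "rowset L n i3 (L i3 j1) \<or> colset L n j3 (L i3 j1)" "rowset L n i3 (L i3 j2) \<or> colset L n j3 (L i3 j2)"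
      using A b by (simp_all add: cvA)
    have P1: "\<And>x y. rowset L n i1 x \<Longrightarrow> colset L n j1 x \<Longrightarrow> rowset L n i1 y \<Longrightarrow> colset L n j1 y \<Longrightarrow> x \<noteq> (L i1 j1) \<Longrightarrow> y \<noteq> (L i1 j1) \<Longrightarrow> x = y"
      by (rule pr[where i=i1 and j=j1]) (use A b in simp_all)
    have P2: "\<And>x y. rowset L n i1 x \<Longrightarrow> colset L n j2 x \<Longrightarrow> rowset L n i1 y \<Longrightarrow> colset L n j2 y \<Longrightarrow> x \<noteq> (L i1 j2) \<Longrightarrow> y \<noteq> (L i1 j2) \<Longrightarrow> x = y"
      by (rule pr[where i=i1 and j=j2]) (use A b in simp_all)
    have P3: "\<And>x y. rowset L n i2 x \<Longrightarrow> colset L n j2 x \<Longrightarrow> rowset L n i2 y \<Longrightarrow> colset L n j2 y \<Longrightarrow> x \<noteq> (L i2 j2) \<Longrightarrow> y \<noteq> (L i2 j2) \<Longrightarrow> x = y"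
      by (rule pr[where i=i2 and j=j2]) (use A b in simp_all)
    have P4: "\<And>x y. rowset L n i2 x \<Longrightarrow> colset L n j3 x \<Longrightarrow> rowset L n i2 y \<Longrightarrow> colset L n j3 y \<Longrightarrow> x \<noteq> (L i2 j3) \<Longrightarrow> y \<noteq> (L i2 j3) \<Longrightarrow> x = y"
      by (rule pr[where i=i2 and j=j3]) (use A b in simp_all)
    have P5: "\<And>x y. rowset L n i3 x \<Longrightarrow> colset L n j3 x \<Longrightarrow> rowset L n i3 y \<Longrightarrow> colset L n j3 y \<Longrightarrow> x \<noteq> (L i3 j3) \<Longrightarrow> y \<noteq> (L i3 j3) \<Longrightarrow> x = y"
      by (rule pr[where i=i3 and j=j3]) (use A b in simp_all)
    have S1: "colset L n j1 (L i1 j2) \<or> colset L n j2 (L i1 j1)"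
      by (rule sr[where i=i1 and j=j1 and j'=j2]) (use A b dst dst' in simp_all)
    have S2: "rowset L n i1 (L i2 j2) \<or> rowset L n i2 (L i1 j2)"
      by (rule sc[where i=i1 and i'=i2 and j=j2]) (use A b dst dst' in simp_all)
    have S3: "colset L n j2 (L i2 j3) \<or> colset L n j3 (L i2 j2)"
      by (rule sr[where i=i2 and j=j2 and j'=j3]) (use A b dst dst' in simp_all)
    have S4: "rowset L n i2 (L i3 j3) \<or> rowset L n i3 (L i2 j3)"
      by (rule sc[where i=i2 and i'=i3 and j=j3]) (use A b dst dst' in simp_all)
    note S = S1 S2 S3 S4
    show False by (rule abstract[OF D M CV P1 P2 P3 P4 P5 S])
  next
    assume B: "P i1 j1 = None \<and> P i2 j1 = None \<and> P i2 j2 = None \<and>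
              P i3 j2 = None \<and> P i3 j3 = None"
    have D: "(L i1 j1) \<noteq> (L i2 j1)" "(L i1 j1) \<noteq> (L i3 j1)" "(L i2 j1) \<noteq> (L i3 j1)" "(L i1 j2) \<noteq> (L i2 j2)" "(L i1 j2) \<noteq> (L i3 j2)" "(L i2 j2) \<noteq> (L i3 j2)"
     "(L i1 j3) \<noteq> (L i2 j3)" "(L i1 j3) \<noteq> (L i3 j3)" "(L i2 j3) \<noteq> (L i3 j3)" "(L i1 j1) \<noteq> (L i1 j2)" "(L i1 j1) \<noteq> (L i1 j3)" "(L i1 j2) \<noteq> (L i1 j3)"
     "(L i2 j1) \<noteq> (L i2 j2)" "(L i2 j1) \<noteq> (L i2 j3)" "(L i2 j2) \<noteq> (L i2 j3)" "(L i3 j1) \<noteq> (L i3 j2)" "(L i3 j1) \<noteq> (L i3 j3)" "(L i3 j2) \<noteq> (L i3 j3)"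
      using b dst dst' by (simp_all add: rowd[OF inL] cold[OF inL])
    have M: "colset L n j1 (L i1 j1)" "rowset L n i1 (L i1 j1)" "colset L n j1 (L i2 j1)" "rowset L n i2 (L i2 j1)" "colset L n j1 (L i3 j1)" "rowset L n i3 (L i3 j1)" "colset L n j2 (L i1 j2)" "rowset L n i1 (L i1 j2)" "colset L n j2 (L i2 j2)" "rowset L n i2 (L i2 j2)" "colset L n j2 (L i3 j2)" "rowset L n i3 (L i3 j2)"
     "colset L n j3 (L i1 j3)" "rowset L n i1 (L i1 j3)" "colset L n j3 (L i2 j3)" "rowset L n i2 (L i2 j3)" "colset L n j3 (L i3 j3)" "rowset L n i3 (L i3 j3)"
      using b by (simp_all add: mem_rc)
    have CV: "colset L n j1 (L i1 j1) \<or> rowset L n i1 (L i1 j1)" "colset L n j1 (L i2 j1) \<or> rowset L n i1 (L i2 j1)" "colset L n j1 (L i2 j2) \<or> rowset L n i1 (L i2 j2)" "colset L n j1 (L i3 j2) \<or> rowset L n i1 (L i3 j2)" "colset L n j1 (L i3 j3) \<or> rowset L n i1 (L i3 j3)" "colset L n j1 (L i1 j2) \<or> rowset L n i1 (L i1 j2)" "colset L n j1 (L i3 j1) \<or> rowset L n i1 (L i3 j1)" "colset L n j1 (L i1 j3) \<or> rowset L n i1 (L i1 j3)" "colset L n j1 (L i2 j3) \<or> rowset L n i1 (L i2 j3)" "colset L n j1 (L i1 j1) \<or> rowset L n i2 (L i1 j1)" "colset L n j1 (L i2 j1) \<or> rowset L n i2 (L i2 j1)" "colset L n j1 (L i2 j2)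 \<or> rowset L n i2 (L i2 j2)" "colset L n j1 (L i3 j2) \<or> rowset L n i2 (L i3 j2)" "colset L n j1 (L i3 j3) \<or> rowset L n i2 (L i3 j3)" "colset L n j1 (L i1 j2) \<or> rowset L n i2 (L i1 j2)" "colset L n j1 (L i3 j1) \<or> rowset L n i2 (L i3 j1)" "colset L n j1 (L i1 j3) \<or> rowset L n i2 (L i1 j3)" "colset L n j1 (L i2 j3) \<or> rowset L n i2 (L i2 j3)" "colset L n j2 (L i1 j1) \<or> rowset L n i2 (L i1 j1)" "colset L n j2 (L i2 j1) \<or> rowset L n i2 (L i2 j1)" "colset L n j2 (L i2 j2) \<or> rowset L n i2 (L i2 j2)" "colset L n j2 (L i3 j2) \<or> rowset L n i2 (L i3 j2)" "colset L n j2 (L i3 j3) \<or> rowset L n i2 (L i3 j3)" "colset L n j2 (L i1 j2) \<or> rowset L n i2 (L i1 j2)" "colset L n j2 (L i3 j1) \<or> rowset L n i2 (L i3 j1)" "colset L n j2 (L i1 j3) \<or> rowset L n i2 (L i1 j3)" "colset L n j2 (L i2 j3) \<or> rowset L n i2 (L i2 j3)" "colset L n j2 (L i1 j1) \<or> rowset L n i3 (L i1 j1)" "colset L n j2 (L i2 j1) \<or> rowset L n i3 (L i2 j1)" "colset L n j2 (L i2 j2) \<or> rowset L n i3 (L i2 j2)" "colset L n j2 (L i3 j2) \<or> rowset L n i3 (L i3 j2)" "colset L n j2 (L i3 j3) \<or> rowset L n i3 (L i3 j3)" "colset L n j2 (L i1 j2) \<or> rowset L n i3 (L i1 j2)" "colset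 L n j2 (L i3 j1) \<or> rowset L n i3 (L i3 j1)" "colset L n j2 (L i1 j3) \<or> rowset L n i3 (L i1 j3)" "colset L n j2 (L i2 j3) \<or> rowset L n i3 (L i2 j3)" "colset L n j3 (L i1 j1) \<or> rowset L n i3 (L i1 j1)" "colset L n j3 (L i2 j1) \<or> rowset L n i3 (L i2 j1)" "colset L n j3 (L i2 j2) \<or> rowset L n i3 (L i2 j2)" "colset L n j3 (L i3 j2) \<or> rowset L n i3 (L i3 j2)" "colset L n j3 (L i3 j3) \<or> rowset L n i3 (L i3 j3)" "colset L n j3 (L i1 j2) \<or> rowset L n i3 (L i1 j2)" "colset L n j3 (L i3 j1) \<or> rowset L n i3 (L i3 j1)" "colset L n j3 (L i1 j3) \<or> rowset L n i3 (L i1 j3)" "colset L n j3 (L i2 j3) \<or> rowset L n i3 (L i2 j3)"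
      using B b by (simp_all add: cvB)
    have P1: "\<And>x y. colset L n j1 x \<Longrightarrow> rowset L n i1 x \<Longrightarrow> colset L n j1 y \<Longrightarrow> rowset L n i1 y \<Longrightarrow> x \<noteq> (L i1 j1) \<Longrightarrow> y \<noteq> (L i1 j1) \<Longrightarrow> x = y"
      by (rule pr[where i=i1 and j=j1]) (use B b in simp_all)
    have P2: "\<And>x y. colset L n j1 x \<Longrightarrow> rowset L n i2 x \<Longrightarrow> colset L n j1 y \<Longrightarrow> rowset L n i2 y \<Longrightarrow> x \<noteq> (L i2 j1) \<Longrightarrow> y \<noteq> (L i2 j1) \<Longrightarrow> x = y"
      by (rule pr[where i=i2 and j=j1]) (use B b in simp_all)
    have P3: "\<And>x y. colset L n j2 x \<Longrightarrow> rowset L n i2 x \<Longrightarrow> colset L n j2 y \<Longrightarrow> rowset L n i2 y \<Longrightarrow> x \<noteq> (L i2 j2) \<Longrightarrow> y \<noteq> (L i2 j2) \<Longrightarrow> x = y"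
      by (rule pr[where i=i2 and j=j2]) (use B b in simp_all)
    have P4: "\<And>x y. colset L n j2 x \<Longrightarrow> rowset L n i3 x \<Longrightarrow> colset L n j2 y \<Longrightarrow> rowset L n i3 y \<Longrightarrow> x \<noteq> (L i3 j2) \<Longrightarrow> y \<noteq> (L i3 j2) \<Longrightarrow> x = y"
      by (rule pr[where i=i3 and j=j2]) (use B b in simp_all)
    have P5: "\<And>x y. colset L n j3 x \<Longrightarrow> rowset L n i3 x \<Longrightarrow> colset L n j3 y \<Longrightarrow> rowset L n i3 y \<Longrightarrow> x \<noteq> (L i3 j3) \<Longrightarrow> y \<noteq> (L i3 j3) \<Longrightarrow> x = y"
      by (rule pr[where i=i3 and j=j3]) (use B b in simp_all)
    have S1: "rowset L n i1 (L i2 j1) \<or> rowset L n i2 (L i1 j1)"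
      by (rule sc[where i=i1 and i'=i2 and j=j1]) (use B b dst dst' in simp_all)
    have S2: "colset L n j1 (L i2 j2) \<or> colset L n j2 (L i2 j1)"
      by (rule sr[where i=i2 and j=j1 and j'=j2]) (use B b dst dst' in simp_all)
    have S3: "rowset L n i2 (L i3 j2) \<or> rowset L n i3 (L i2 j2)"
      by (rule sc[where i=i2 and i'=i3 and j=j2]) (use B b dst dst' in simp_all)
    have S4: "colset L n j2 (L i3 j3) \<or> colset L n j3 (L i3 j2)"
      by (rule sr[where i=i3 and j=j2 and j'=j3]) (use B b dst dst' in simp_all)
    note S = S1 S2 S3 S4
    show False by (rule abstract[OF D M CV P1 P2 P3 P4 P5 S])
  qed
qed

end
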